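(* Let $I\subseteq\mathbb{R}$ be an interval, let $f:I\to\mathbb{R}$ be differentiable on the interior $I^{\circ}$, let $a,b\in I^{\circ}$ with $a<b$, assume $f'\in L[a,b]$, and let $\alpha,\lambda\in[0,1]$. Suppose that $|f'|^{q}$ is concave on $[a,b]$ for some $q>1$, and let $p$ satisfy $\frac1p+\frac1q=1$. Define $$I_f(\lambda,\alpha,a,b)=\lambda\big(\alpha f(a)+(1-\alpha)f(b)\big)+(1-\lambda)f(\alpha a+(1-\alpha)b)-\frac{1}{b-a}\int_a^b f(x)\,dx,$$ $$E_f(\alpha,q)=(1-\alpha)\left|f'\!\left(\tfrac{(1-\alpha)b+(1+\alpha)a}{2}\right)\right|^q,\qquad F_f(\alpha,q)=\alpha\left|f'\!\left(\tfrac{(2-\alpha)b+\alpha a}{2}\right)\right|^q,$$ $$\varepsilon_1(\alpha,\lambda,p)=(\alpha\lambda)^{p+1}+(1-\alpha-\alpha\lambda)^{p+1},\qquad \varepsilon_2(\alpha,\lambda,p)=(\alpha\lambda)^{p+1}-(\alpha\lambda-1+\alpha)^{p+1}.$$ Then $|I_f(\lambda,\alpha,a,b)|\leq (b-a)\left(\frac{1}{p+1}\right)^{1/p}\cdot K$, where $K=\varepsilon_1^{1/p}(\alpha,\lambda,p)E_f^{1/q}(\alpha,q)+\varepsilon_1^{1/p}(1-\alpha,\lambda,p)F_f^{1/q}(\alpha,q)$ if $\alpha\lambda\leq 1-\alpha\leq 1-\lambda(1-\alpha)$; $K=\varepsilon_1^{1/p}(\alpha,\lambda,p)E_f^{1/q}(\alpha,q)+\varepsilon_2^{1/p}(1-\alpha,\lambda,p)F_f^{1/q}(\alpha,q)$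 if $\alpha\lambda\leq 1-\lambda(1-\alpha)\leq 1-\alpha$; $K=\varepsilon_2^{1/p}(\alpha,\lambda,p)E_f^{1/q}(\alpha,q)+\varepsilon_1^{1/p}(1-\alpha,\lambda,p)F_f^{1/q}(\alpha,q)$ if $1-\alpha\leq\alpha\lambda\leq 1-\lambda(1-\alpha)$. *)

theory Defs
  imports "HOL-Analysis.Analysis"
begin

definition I_f :: "(real \<Rightarrow> real) \<Rightarrow> real \<Rightarrow> real \<Rightarrow> real \<Rightarrow> real \<Rightarrow> real" where
  "I_f f lam \<alpha> a b =
     lam * (\<alpha> * f a + (1 - \<alpha>) * f b) + (1 - lam) * f (\<alpha> * a + (1 - \<alpha>) * b)
     - (1 / (b - a)) * integral {a..b} f"

definition E_f :: "(real \<Rightarrow> real) \<Rightarrow> real \<Rightarrow> real \<Rightarrow> real \<Rightarrow> real \<Rightarrow> real" where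
  "E_f f a b \<alpha> q = (1 - \<alpha>) * \<bar>deriv f (((1 - \<alpha>) * b + (1 + \<alpha>) * a) / 2)\<bar> powr q"

definition F_f :: "(real \<Rightarrow> real) \<Rightarrow> real \<Rightarrow> real \<Rightarrow> real \<Rightarrow> real \<Rightarrow> real" where
  "F_f f a b \<alpha> q = \<alpha> * \<bar>deriv f (((2 - \<alpha>) * b + \<alpha> * a) / 2)\<bar> powr q"

definition eps1 :: "real \<Rightarrow> real \<Rightarrow> real \<Rightarrow> real" where
  "eps1 \<alpha> lam p = (\<alpha> * lam) powr (p + 1) + (1 - \<alpha> - \<alpha> * lam) powr (p + 1)"

definition eps2 :: "real \<Rightarrow> real \<Rightarrow> real \<Rightarrow> real" where
  "eps2 \<alpha> lam p = (\<alpha> * lam) powr (p + 1) - (\<alpha> * lam - 1 + \<alpha>) powr (p + 1)"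

end

theory Submission
  imports Defs
begin


lemma int_powr_right:
  fixes c l r p :: real
  assumes "p > 0" "c \<le> l" "l \<le> r"
  shows "((\<lambda>x. (x - c) powr p) has_integral ((r - c) powr (p+1) - (l - c) powr (p+1)) / (p+1)) {l..r}"
proof -
  have "((\<lambda>x. (x - c) powr p) has_integral ((\<lambda>x. (x - c) powr (p+1) / (p+1)) r - (\<lambda>x. (x - c) powr (p+1) / (p+1)) l)) {l..r}"
  proof (rule fundamental_theorem_of_calculus_interior)
    show "l \<le> r" using assms by simp
    show "continuous_on {l..r} (\<lambda>x. (x - c) powr (p + 1) / (p + 1))"
      using assms by (intro continuous_intros continuous_on_powr') auto
    fix x assume x: "x \<in> {l<..<r}"
    hence "x - c > 0" using assms by auto
    have "((\<lambda>x. (x - c) powr (p + 1)) has_real_derivative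
          ((p+1) * (x - c) powr (p + 1 - 1) * 1)) (at x)"
      using DERIV_chain2[of "\<lambda>z. z powr (p+1)" "(p+1) * (x - c) powr (p + 1 - 1)" "\<lambda>x. x - c" x 1 UNIV]
          has_real_derivative_powr[OF \<open>x - c > 0\<close>, of "p+1"]
        using \<open>x - c > 0\<close> by (auto intro!: derivative_eq_intros)
    hence "((\<lambda>x. (x - c) powr (p + 1) / (p + 1)) has_real_derivative
          ((p+1) * (x - c) powr (p + 1 - 1) * 1) / (p+1)) (at x)"
      by (rule DERIV_cdivide)
    thus "((\<lambda>x. (x - c) powr (p + 1) / (p + 1)) has_vector_derivative (x - c) powr p) (at x)"
      using assms by (simp add: has_real_derivative_iff_has_vector_derivative[symmetric])
  qed
  thus ?thesis by (simp add: diff_divide_distrib)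
qed

lemma int_powr_left:
  fixes c l r p :: real
  assumes "p > 0" "r \<le> c" "l \<le> r"
  shows "((\<lambda>x. (c - x) powr p) has_integral ((c - l) powr (p+1) - (c - r) powr (p+1)) / (p+1)) {l..r}"
proof -
  have "((\<lambda>x. (c - x) powr p) has_integral ((\<lambda>x. (- ((c - x) powr (p+1))) / (p+1)) r - (\<lambda>x. (- ((c - x) powr (p+1))) / (p+1)) l)) {l..r}"
  proof (rule fundamental_theorem_of_calculus_interior)
    show "l \<le> r" using assms by simp
    show "continuous_on {l..r} (\<lambda>x. (- ((c - x) powr (p + 1))) / (p + 1))"
      using assms by (intro continuous_intros continuous_on_powr') auto
    fix x assume x: "x \<in> {l<..<r}"
    hence "c - x > 0" using assms by auto
    have "((\<lambda>x. (c - x) powr (p + 1)) has_real_derivative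
          ((p+1) * (c - x) powr (p + 1 - 1) * (-1))) (at x)"
      using DERIV_chain2[of "\<lambda>z. z powr (p+1)" "(p+1) * (c - x) powr (p + 1 - 1)" "\<lambda>x. c - x" x "-1" UNIV]
          has_real_derivative_powr[OF \<open>c - x > 0\<close>, of "p+1"]
        using \<open>c - x > 0\<close> by (auto intro!: derivative_eq_intros)
    hence "((\<lambda>x. (- ((c - x) powr (p + 1))) / (p + 1)) has_real_derivative
          - ((p+1) * (c - x) powr (p + 1 - 1) * (-1)) / (p+1)) (at x)"
      by (intro DERIV_cdivide DERIV_minus)
    thus "((\<lambda>x. (- ((c - x) powr (p + 1))) / (p + 1)) has_vector_derivative (c - x) powr p) (at x)"
      using assms by (simp add: has_real_derivative_iff_has_vector_derivative[symmetric])
  qed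
  thus ?thesis by (simp add: diff_divide_distrib)
qed

lemma int_abs_powr:
  fixes u l r p :: real
  assumes "p > 0" "l \<le> r"
  shows "u \<le> l \<Longrightarrow> ((\<lambda>x. \<bar>x - u\<bar> powr p) has_integral ((r - u) powr (p+1) - (l - u) powr (p+1)) / (p+1)) {l..r}"
    and "l \<le> u \<Longrightarrow> u \<le> r \<Longrightarrow> ((\<lambda>x. \<bar>x - u\<bar> powr p) has_integral ((u - l) powr (p+1) + (r - u) powr (p+1)) / (p+1)) {l..r}"
    and "r \<le> u \<Longrightarrow> ((\<lambda>x. \<bar>x - u\<bar> powr p) has_integral ((u - l) powr (p+1) - (u - r) powr (p+1)) / (p+1)) {l..r}"
proof -
  have R: "((\<lambda>x. \<bar>x - u\<bar> powr p) has_integral ((r - u) powr (p+1) - (l - u) powr (p+1)) / (p+1)) {l..r}"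
    if "u \<le> l" "l \<le> r" for l r
    using int_powr_right[OF assms(1) that]
    by (rule has_integral_eq[rotated]) (use that in auto)
  show "u \<le> l \<Longrightarrow> ((\<lambda>x. \<bar>x - u\<bar> powr p) has_integral ((r - u) powr (p+1) - (l - u) powr (p+1)) / (p+1)) {l..r}"
    using R assms by blast
  have L: "((\<lambda>x. \<bar>x - u\<bar> powr p) has_integral ((u - l) powr (p+1) - (u - r) powr (p+1)) / (p+1)) {l..r}"
    if "r \<le> u" "l \<le> r" for l r
    using int_powr_left[OF assms(1) that]
    by (rule has_integral_eq[rotated]) (use that(1) in auto)
  show "r \<le> u \<Longrightarrow> ((\<lambda>x. \<bar>x - u\<bar> powr p) has_integral ((u - l) powr (p+1) - (u - r) powr (p+1)) / (p+1)) {l..r}"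
    using L assms by blast
  assume "l \<le> u" "u \<le> r"
  have "((\<lambda>x. \<bar>x - u\<bar> powr p) has_integral ((u - l) powr (p+1) - (u - u) powr (p+1)) / (p+1)
     + ((r - u) powr (p+1) - (u - u) powr (p+1)) / (p+1)) {l..r}"
    by (rule has_integral_combine[OF \<open>l \<le> u\<close> \<open>u \<le> r\<close> L R]) (use \<open>l \<le> u\<close> \<open>u \<le> r\<close> in auto)
  thus "((\<lambda>x. \<bar>x - u\<bar> powr p) has_integral ((u - l) powr (p+1) + (r - u) powr (p+1)) / (p+1)) {l..r}"
    by (simp add: add_divide_distrib)
qed

lemma young_opt:
  fixes p q A B X :: real
  assumes pq: "p > 1" "q > 1" "1/p + 1/q = 1" and AB: "A \<ge> 0" "B \<ge> 0"
    and H: "\<And>s. s > 0 \<Longrightarrow> X \<le> s powr p * A / p + B / (q * s powr q)"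
  shows "X \<le> A powr (1/p) * B powr (1/q)"
proof (cases "A = 0")
  case True
  show ?thesis
  proof (rule ccontr)
    assume "\<not> ?thesis"
    hence X: "X > 0" using True by simp
    define s where "s = (B/(q*X) + 1) powr (1/q)"
    have "B/(q*X) \<ge> 0" using X pq AB by simp
    hence pos: "B/(q*X) + 1 > 0" by linarith
    hence "s > 0" unfolding s_def by simp
    have sq: "s powr q = B/(q*X) + 1" unfolding s_def using pos pq by (simp add: powr_powr)
    have h1: "X \<le> B / (q * (B/(q*X) + 1))" using H[OF \<open>s > 0\<close>] True sq by simp
    have bq: "B + q*X > 0" using X pq AB by (simp add: add_nonneg_pos)
    have "q * (B/(q*X) + 1) = (B + q*X) / X" using X pq by (simp add: field_simps)
    hence h2: "B / (q * (B/(q*X) + 1)) = B * X / (B + q*X)" by simp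
    have h3: "B * X / (B + q*X) < X" using X pq AB bq by (subst divide_less_eq) (auto simp: algebra_simps)
    show False using h1 h2 h3 by simp
  qed
next
  case Apos: False
  hence A: "A > 0" using AB by simp
  show ?thesis
  proof (cases "B = 0")
    case True
    show ?thesis
    proof (rule ccontr)
      assume "\<not> ?thesis"
      hence X: "X > 0" using True by simp
      define s where "s = (X * p / (2*A)) powr (1/p)"
      have pos: "X * p / (2*A) > 0" using X pq A by auto
      hence "s > 0" unfolding s_def by (metis powr_gt_zero order_less_irrefl)
      have sp: "s powr p = X * p / (2*A)" unfolding s_def using pos pq X A by (simp add: powr_powr)
      have "X \<le> X * p / (2*A) * A / p" using H[OF \<open>s > 0\<close>] True sp by simp
      also have "\<dots> < X" using X pq A by (simp add: field_simps)
      finally show False by simp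
    qed
  next
    case False
    hence B: "B > 0" using AB by simp
    define w where "w = A powr (1/p) * B powr (1/q)"
    define s where "s = (B/A) powr (1/(p*q))"
    have "s > 0" unfolding s_def using A B by simp
    have sp: "s powr p = B powr (1/q) / A powr (1/q)"
      unfolding s_def using A B pq by (simp add: powr_powr powr_divide)
    have sq: "s powr q = B powr (1/p) / A powr (1/p)"
      unfolding s_def using A B pq by (simp add: powr_powr powr_divide)
    have A1: "A = A powr (1/p) * A powr (1/q)"
      using A pq by (simp add: powr_add[symmetric])
    have B1: "B = B powr (1/p) * B powr (1/q)"
      using B pq by (simp add: powr_add[symmetric])
    have e1: "s powr p * A = w"
      unfolding sp w_def by (subst A1) (use A in simp)
    have e2: "B / s powr q = w"
      unfolding sq w_def by (subst B1) (use A B in \<open>simp add: field_simps\<close>)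
    have "X \<le> s powr p * A / p + B / (q * s powr q)" using H[OF \<open>s > 0\<close>] .
    also have "\<dots> = w / p + w / q"
    proof -
      have "B / (q * s powr q) = B / s powr q / q" by (simp add: ac_simps)
      hence e3: "B / (q * s powr q) = w / q" using e2 by simp
      show ?thesis using e1 e3 by simp
    qed
    also have "\<dots> = w * (1/p + 1/q)" by (simp add: distrib_left)
    also have "\<dots> = w" using pq(3) by simp
    finally show ?thesis unfolding w_def .
  qed
qed



lemma concave_slope:
  fixes g :: "real \<Rightarrow> real"
  assumes "concave_on {a..b} g" "a \<le> y" "y < c" "c < z" "z \<le> b"
  shows "(g z - g c) / (z - c) \<le> (g c - g y) / (c - y)"
proof -
  have cv: "convex_on {a..b} (\<lambda>x. - g x)" using assms(1) by (simp add: concave_on_def)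
  have "((- g y) - (- g c)) / (y - c) \<le> ((- g y) - (- g z)) / (y - z)"
       "((- g y) - (- g z)) / (y - z) \<le> ((- g c) - (- g z)) / (c - z)"
    using convex_on_slope_le[OF cv, of y z c] assms by auto
  hence "((- g y) - (- g c)) / (y - c) \<le> ((- g c) - (- g z)) / (c - z)" by linarith
  moreover have "((- g y) - (- g c)) / (y - c) = - ((g c - g y) / (c - y))"
  proof -
    have "((- g y) - (- g c)) = (g c - g y)" "y - c = - (c - y)" by simp_all
    thus ?thesis by (simp only: divide_minus_right)
  qed
  moreover have "((- g c) - (- g z)) / (c - z) = - ((g z - g c) / (z - c))"
  proof -
    have "((- g c) - (- g z)) = (g z - g c)" "c - z = - (z - c)" by simp_all
    thus ?thesis by (simp only: divide_minus_right)
  qed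
  ultimately show ?thesis by linarith
qed

lemma concave_supergradient:
  fixes g :: "real \<Rightarrow> real"
  assumes "concave_on {a..b} g" "a < c" "c < b"
  shows "\<exists>d. \<forall>y\<in>{a..b}. g y \<le> g c + d * (y - c)"
proof -
  define S where "S = (\<lambda>y. (g c - g y) / (c - y)) ` {a..<c}"
  define d where "d = Inf S"
  have ne: "S \<noteq> {}" unfolding S_def using assms by auto
  have lb: "(g b - g c) / (b - c) \<le> s" if "s \<in> S" for s
    using that concave_slope[OF assms(1), of _ c b] assms unfolding S_def by auto
  have bdd: "bdd_below S" unfolding bdd_below_def using lb by blast
  show ?thesis
  proof (intro exI ballI)
    fix y assume y: "y \<in> {a..b}"
    consider "y < c" | "y = c" | "y > c" by linarith
    thus "g y \<le> g c + d * (y - c)"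
    proof cases
      case 1
      hence "(g c - g y) / (c - y) \<in> S" unfolding S_def using y by auto
      hence "d \<le> (g c - g y) / (c - y)" unfolding d_def using bdd by (rule cInf_lower)
      hence "d * (c - y) \<le> g c - g y" using 1 by (simp add: le_divide_eq)
      thus ?thesis by (simp add: algebra_simps)
    next
      case 2 thus ?thesis by simp
    next
      case 3
      have "(g y - g c) / (y - c) \<le> d" unfolding d_def
      proof (rule cInf_greatest[OF ne])
        fix s assume "s \<in> S"
        then obtain x where x: "x \<in> {a..<c}" "s = (g c - g x) / (c - x)" unfolding S_def by auto
        show "(g y - g c) / (y - c) \<le> s" using concave_slope[OF assms(1), of x c y] x y 3 by auto
      qed
      hence "g y - g c \<le> d * (y - c)" using 3 by (simp add: divide_le_eq)
      thus ?thesis by (simp add: algebra_simps)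
    qed
  qed
qed

lemma concave_majorant:
  fixes g :: "real \<Rightarrow> real"
  assumes "concave_on {a..b} g" "a \<le> l" "l \<le> r" "r \<le> b"
  shows "\<exists>h. (h has_integral (r - l) * g ((l+r)/2)) {l..r} \<and> (\<forall>x\<in>{l..r}. g x \<le> h x)"
proof (cases "l = r")
  case True
  show ?thesis
    by (rule exI[of _ "\<lambda>_. g l"]) (use True in auto)
next
  case False
  hence lr: "l < r" using assms by simp
  define c where "c = (l + r) / 2"
  have c: "a < c" "c < b" using lr assms unfolding c_def by auto
  obtain d where d: "\<forall>y\<in>{a..b}. g y \<le> g c + d * (y - c)"
    using concave_supergradient[OF assms(1) c] by blast
  have "((\<lambda>y. g c + d * (y - c)) has_integral
      ((\<lambda>y. g c * y + d * (y - c)^2 / 2) r - (\<lambda>y. g c * y + d * (y - c)^2 / 2) l)) {l..r}"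
  proof (rule fundamental_theorem_of_calculus)
    show "l \<le> r" using lr by simp
    fix x assume "x \<in> {l..r}"
    have "((\<lambda>y. g c * y + d * (y - c)^2 / 2) has_real_derivative (g c + d * (x - c))) (at x within {l..r})"
      by (auto intro!: derivative_eq_intros simp: field_simps)
    thus "((\<lambda>y. g c * y + d * (y - c)^2 / 2) has_vector_derivative (g c + d * (x - c))) (at x within {l..r})"
      by (simp add: has_real_derivative_iff_has_vector_derivative[symmetric])
  qed
  moreover have "(\<lambda>y. g c * y + d * (y - c)^2 / 2) r - (\<lambda>y. g c * y + d * (y - c)^2 / 2) l
      = (r - l) * g c"
  proof -
    have "(r - c)^2 = (l - c)^2" unfolding c_def by (simp add: power2_eq_square field_simps)
    thus ?thesis by (simp add: algebra_simps)
  qed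
  moreover have "\<forall>x\<in>{l..r}. g x \<le> g c + d * (x - c)"
  proof
    fix x assume "x \<in> {l..r}"
    hence "x \<in> {a..b}" using assms by simp
    thus "g x \<le> g c + d * (x - c)" using d by blast
  qed
  ultimately have "((\<lambda>y. g c + d * (y - c)) has_integral (r - l) * g c) {l..r} \<and> (\<forall>x\<in>{l..r}. g x \<le> g c + d * (x - c))"
    by simp
  thus ?thesis unfolding c_def by blast
qed




lemma ibp_ident:
  fixes f f' :: "real \<Rightarrow> real"
  assumes D: "\<And>x. x \<in> {l..r} \<Longrightarrow> (f has_real_derivative f' x) (at x)" and lr: "l \<le> r"
  shows "((\<lambda>x. (x - u) * f' x) has_integral ((r - u) * f r - (l - u) * f l - integral {l..r} f)) {l..r}"
proof -
  have cont: "continuous_on {l..r} f"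
  proof (intro continuous_at_imp_continuous_on ballI)
    fix x assume "x \<in> {l..r}"
    thus "isCont f x" using D DERIV_isCont by blast
  qed
  have "((\<lambda>x. f x + (x - u) * f' x) has_integral ((r - u) * f r - (l - u) * f l)) {l..r}"
  proof (rule fundamental_theorem_of_calculus[OF lr])
    fix x assume x: "x \<in> {l..r}"
    have "((\<lambda>x. (x - u) * f x) has_real_derivative ((1 - 0) * f x + f' x * (x - u))) (at x within {l..r})"
      by (rule DERIV_mult has_field_derivative_at_within[OF D[OF x]] derivative_eq_intros refl)+
    thus "((\<lambda>x. (x - u) * f x) has_vector_derivative (f x + (x - u) * f' x)) (at x within {l..r})"
      by (simp add: has_real_derivative_iff_has_vector_derivative[symmetric] mult.commute)
  qed
  moreover have "(f has_integral integral {l..r} f) {l..r}"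
    using integrable_continuous_interval[OF cont] by (simp add: has_integral_integral)
  ultimately have "((\<lambda>x. (f x + (x - u) * f' x) - f x) has_integral ((r - u) * f r - (l - u) * f l - integral {l..r} f)) {l..r}"
    by (rule has_integral_diff)
  thus ?thesis by simp
qed

lemma interval_bound:
  fixes f f' :: "real \<Rightarrow> real"
  assumes D: "\<And>x. x \<in> {l..r} \<Longrightarrow> (f has_real_derivative f' x) (at x)" and lr: "l \<le> r"
    and ai: "f' absolutely_integrable_on {l..r}"
    and cc: "concave_on {a..b} (\<lambda>x. \<bar>f' x\<bar> powr q)" and ab: "a \<le> l" "r \<le> b"
    and pq: "p > 1" "q > 1" "1/p + 1/q = 1"
    and A: "((\<lambda>x. \<bar>x - u\<bar> powr p) has_integral A) {l..r}"
  shows "\<bar>(r - u) * f r - (l - u) * f l - integral {l..r} f\<bar>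
          \<le> A powr (1/p) * ((r - l) * \<bar>f' ((l + r) / 2)\<bar> powr q) powr (1/q)"
proof -
  define J where "J = (r - u) * f r - (l - u) * f l - integral {l..r} f"
  have HJ: "((\<lambda>x. (x - u) * f' x) has_integral J) {l..r}"
    unfolding J_def by (rule ibp_ident[OF D lr])
  have prod: "(\<lambda>x. (x - u) * f' x) absolutely_integrable_on {l..r}"
    by (rule absolutely_integrable_bounded_measurable_product_real)
       (auto intro!: continuous_imp_measurable_on_sets_lebesgue continuous_intros
             compact_imp_bounded compact_continuous_image ai)
  hence int_abs: "(\<lambda>x. \<bar>x - u\<bar> * \<bar>f' x\<bar>) integrable_on {l..r}"
    unfolding absolutely_integrable_on_def by (simp add: abs_mult)
  have "\<bar>J\<bar> = norm (integral {l..r} (\<lambda>x. (x - u) * f' x))"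
    using HJ by (simp add: integral_unique)
  also have "\<dots> \<le> integral {l..r} (\<lambda>x. \<bar>x - u\<bar> * \<bar>f' x\<bar>)"
    by (rule Henstock_Kurzweil_Integration.integral_norm_bound_integral)
       (use HJ int_abs in \<open>auto simp: abs_mult\<close>)
  also have "\<dots> \<le> A powr (1/p) * ((r - l) * \<bar>f' ((l + r) / 2)\<bar> powr q) powr (1/q)"
  proof -
    obtain h where h: "(h has_integral (r - l) * \<bar>f' ((l + r) / 2)\<bar> powr q) {l..r}"
      "\<forall>x\<in>{l..r}. \<bar>f' x\<bar> powr q \<le> h x"
      using concave_majorant[OF cc ab(1) lr ab(2)] by blast
    show ?thesis
    proof (rule young_opt[OF pq])
      show "0 \<le> A" using A by (rule has_integral_nonneg) simp
      show "0 \<le> (r - l) * \<bar>f' ((l + r) / 2)\<bar> powr q" using lr by simp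
      fix s :: real assume s: "s > 0"
      have I1: "((\<lambda>x. s powr p * \<bar>x - u\<bar> powr p / p + h x / (q * s powr q)) has_integral
          (s powr p * A / p + ((r - l) * \<bar>f' ((l + r) / 2)\<bar> powr q) / (q * s powr q))) {l..r}"
        by (intro has_integral_add has_integral_divide has_integral_mult_right A h(1))
      have I2: "((\<lambda>x. \<bar>x - u\<bar> * \<bar>f' x\<bar>) has_integral integral {l..r} (\<lambda>x. \<bar>x - u\<bar> * \<bar>f' x\<bar>)) {l..r}"
        using int_abs by (simp add: has_integral_integral)
      have I3: "\<bar>x - u\<bar> * \<bar>f' x\<bar> \<le> s powr p * \<bar>x - u\<bar> powr p / p + h x / (q * s powr q)"
        if x: "x \<in> {l..r}" for x
      proof -
        have "\<bar>x - u\<bar> * \<bar>f' x\<bar> = (s * \<bar>x - u\<bar>) * (\<bar>f' x\<bar> / s)" using s by simp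
        also have "\<dots> \<le> (s * \<bar>x - u\<bar>) powr p / p + (\<bar>f' x\<bar> / s) powr q / q"
          by (rule Youngs_inequality) (use pq s in auto)
        also have "(s * \<bar>x - u\<bar>) powr p = s powr p * \<bar>x - u\<bar> powr p"
          using s by (simp add: powr_mult)
        also have "(\<bar>f' x\<bar> / s) powr q = \<bar>f' x\<bar> powr q / s powr q"
          using s by (simp add: powr_divide)
        also have "\<bar>f' x\<bar> powr q / s powr q / q \<le> h x / (q * s powr q)"
        proof -
          have "\<bar>f' x\<bar> powr q / s powr q / q = \<bar>f' x\<bar> powr q / (q * s powr q)"
            by (simp add: ac_simps)
          also have "\<dots> \<le> h x / (q * s powr q)"
            using h(2) x s pq by (intro divide_right_mono) auto
          finally show ?thesis .
        qed
        finally show ?thesis by simp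
      qed
      show "integral {l..r} (\<lambda>x. \<bar>x - u\<bar> * \<bar>f' x\<bar>)
          \<le> s powr p * A / p + (r - l) * \<bar>f' ((l + r) / 2)\<bar> powr q / (q * s powr q)"
        by (rule has_integral_le[OF I2 I1 I3])
    qed
  qed
  finally show ?thesis unfolding J_def .
qed




lemma powr_alg:
  fixes L e Ev p q :: real
  assumes L: "L > 0" and e: "e \<ge> 0" and Ev: "Ev \<ge> 0" and pq: "p > 1" "q > 1" "1/p + 1/q = 1"
  shows "(L powr (p+1) * e / (p+1)) powr (1/p) * (L * Ev) powr (1/q)
       = L * L * ((1/(p+1)) powr (1/p) * e powr (1/p) * Ev powr (1/q))"
proof -
  have p1: "p + 1 > 0" using pq by simp
  have "L powr (p+1) * e / (p+1) = L powr (p+1) * (e * (1/(p+1)))" by simp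
  hence "(L powr (p+1) * e / (p+1)) powr (1/p) = (L powr (p+1)) powr (1/p) * (e powr (1/p) * (1/(p+1)) powr (1/p))"
    using L e p1 by (simp only: powr_mult[symmetric])
  also have "(L powr (p+1)) powr (1/p) = L powr ((p+1)/p)" using L by (simp add: powr_powr)
  finally have h1: "(L powr (p+1) * e / (p+1)) powr (1/p) = L powr ((p+1)/p) * (e powr (1/p) * (1/(p+1)) powr (1/p))" .
  have h2: "(L * Ev) powr (1/q) = L powr (1/q) * Ev powr (1/q)" using L Ev by (simp add: powr_mult)
  have "(p+1)/p + 1/q = 2" using pq by (simp add: add_divide_distrib)
  hence h3: "L powr ((p+1)/p) * L powr (1/q) = L * L"
    using L by (simp add: powr_add[symmetric] power2_eq_square)
  show ?thesis unfolding h1 h2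
    using h3 by (simp add: ac_simps)
qed

lemma main_bound:
  fixes f :: "real \<Rightarrow> real" and a b \<alpha> lam p q u v e1 e2 :: real
  assumes ab: "a < b"
    and D: "\<And>x. x \<in> {a..b} \<Longrightarrow> (f has_real_derivative deriv f x) (at x)"
    and ai: "deriv f absolutely_integrable_on {a..b}"
    and al: "\<alpha> \<in> {0..1}" and la: "lam \<in> {0..1}"
    and pq: "p > 1" "q > 1" "1/p + 1/q = 1"
    and cc: "concave_on {a..b} (\<lambda>x. \<bar>deriv f x\<bar> powr q)"
    and u: "u = a + \<alpha> * lam * (b - a)" and v: "v = b - lam * (1 - \<alpha>) * (b - a)"
    and I1: "((\<lambda>x. \<bar>x - u\<bar> powr p) has_integral ((b - a) powr (p+1) * e1 / (p+1))) {a..\<alpha> * a + (1 - \<alpha>) * b}"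
    and I2: "((\<lambda>x. \<bar>x - v\<bar> powr p) has_integral ((b - a) powr (p+1) * e2 / (p+1))) {\<alpha> * a + (1 - \<alpha>) * b..b}"
  shows "\<bar>I_f f lam \<alpha> a b\<bar> \<le> (b - a) * (1 / (p + 1)) powr (1 / p) *
         (e1 powr (1 / p) * E_f f a b \<alpha> q powr (1 / q)
          + e2 powr (1 / p) * F_f f a b \<alpha> q powr (1 / q))"
proof -
  define L where "L = b - a"
  have L: "L > 0" using ab L_def by simp
  define m where "m = \<alpha> * a + (1 - \<alpha>) * b"
  have m: "m = a + (1 - \<alpha>) * L" unfolding m_def L_def by (simp add: algebra_simps)
  have dm: "m - a = (1 - \<alpha>) * L" "b - m = \<alpha> * L" unfolding m_def L_def by (simp_all add: algebra_simps)
  have "0 \<le> (1 - \<alpha>) * L" "0 \<le> \<alpha> * L" using al L by simp_all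
  hence am: "a \<le> m" "m \<le> b" using dm by linarith+
  have p1: "p + 1 > 0" using pq by simp
  have e1: "e1 \<ge> 0"
  proof -
    have "0 \<le> (b - a) powr (p+1) * e1 / (p+1)" using I1 by (rule has_integral_nonneg) simp
    hence "0 \<le> (b - a) powr (p+1) * e1" using p1 by (simp add: zero_le_divide_iff)
    thus ?thesis using ab by (simp add: zero_le_mult_iff)
  qed
  have e2: "e2 \<ge> 0"
  proof -
    have "0 \<le> (b - a) powr (p+1) * e2 / (p+1)" using I2 by (rule has_integral_nonneg) simp
    hence "0 \<le> (b - a) powr (p+1) * e2" using p1 by (simp add: zero_le_divide_iff)
    thus ?thesis using ab by (simp add: zero_le_mult_iff)
  qed
  define K1 where "K1 = (m - u) * f m - (a - u) * f a - integral {a..m} f"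
  define K2 where "K2 = (b - v) * f b - (m - v) * f m - integral {m..b} f"
  have B1: "\<bar>K1\<bar> \<le> ((b - a) powr (p+1) * e1 / (p+1)) powr (1/p) * ((m - a) * \<bar>deriv f ((a + m) / 2)\<bar> powr q) powr (1/q)"
    unfolding K1_def
    by (rule interval_bound[OF _ am(1) absolutely_integrable_on_subinterval[OF ai] cc _ _ pq I1[folded m_def]])
       (use am D in auto)
  have B2: "\<bar>K2\<bar> \<le> ((b - a) powr (p+1) * e2 / (p+1)) powr (1/p) * ((b - m) * \<bar>deriv f ((m + b) / 2)\<bar> powr q) powr (1/q)"
    unfolding K2_def
    by (rule interval_bound[OF _ am(2) absolutely_integrable_on_subinterval[OF ai] cc _ _ pq I2[folded m_def]])
       (use am D in auto)
  have E: "(m - a) * \<bar>deriv f ((a + m) / 2)\<bar> powr q = L * E_f f a b \<alpha> q"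
  proof -
    have pt: "(a + m) / 2 = ((1 - \<alpha>) * b + (1 + \<alpha>) * a) / 2" unfolding m_def by (simp add: algebra_simps)
    show ?thesis unfolding E_f_def dm(1) pt by (simp add: algebra_simps)
  qed
  have F: "(b - m) * \<bar>deriv f ((m + b) / 2)\<bar> powr q = L * F_f f a b \<alpha> q"
  proof -
    have pt: "(m + b) / 2 = ((2 - \<alpha>) * b + \<alpha> * a) / 2" unfolding m_def by (simp add: algebra_simps)
    show ?thesis unfolding F_f_def dm(2) pt by (simp add: algebra_simps)
  qed
  have Enn: "E_f f a b \<alpha> q \<ge> 0" unfolding E_f_def using al by simp
  have Fnn: "F_f f a b \<alpha> q \<ge> 0" unfolding F_f_def using al by simp
  have cont: "continuous_on {a..b} f"
  proof (intro continuous_at_imp_continuous_on ballI)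
    fix x assume "x \<in> {a..b}"
    thus "isCont f x" using D DERIV_isCont by blast
  qed
  have split: "integral {a..m} f + integral {m..b} f = integral {a..b} f"
    using Henstock_Kurzweil_Integration.integral_combine[OF am integrable_continuous_interval[OF cont]] by simp
  have ident: "L * I_f f lam \<alpha> a b = K1 + K2"
  proof -
    have "L * I_f f lam \<alpha> a b = L * (lam * (\<alpha> * f a + (1 - \<alpha>) * f b) + (1 - lam) * f m) - integral {a..b} f"
    proof -
      have Linv: "L * (1 / (b - a) * integral {a..b} f) = integral {a..b} f"
        using L unfolding L_def by simp
      have "L * I_f f lam \<alpha> a b = L * (lam * (\<alpha> * f a + (1 - \<alpha>) * f b) + (1 - lam) * f m)
             - L * (1 / (b - a) * integral {a..b} f)"
        unfolding I_f_def m_def by (simp only: right_diff_distrib)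
      thus ?thesis unfolding Linv .
    qed
    also have "\<dots> = K1 + K2"
      unfolding K1_def K2_def split[symmetric] u v m L_def by (simp add: algebra_simps)
    finally show ?thesis .
  qed
  define C where "C = (1 / (p + 1)) powr (1 / p)"
  have X1: "\<bar>K1\<bar> \<le> L * L * (C * e1 powr (1/p) * E_f f a b \<alpha> q powr (1/q))"
    using B1 unfolding E powr_alg[OF L e1 Enn pq] C_def L_def[symmetric] .
  have X2: "\<bar>K2\<bar> \<le> L * L * (C * e2 powr (1/p) * F_f f a b \<alpha> q powr (1/q))"
    using B2 unfolding F powr_alg[OF L e2 Fnn pq] C_def L_def[symmetric] .
  have "L * \<bar>I_f f lam \<alpha> a b\<bar> = \<bar>K1 + K2\<bar>"
    using ident abs_mult[of L "I_f f lam \<alpha> a b"] abs_of_pos[OF L] by simp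
  also have "\<dots> \<le> \<bar>K1\<bar> + \<bar>K2\<bar>" by (rule abs_triangle_ineq)
  also have "\<dots> \<le> L * L * (C * e1 powr (1/p) * E_f f a b \<alpha> q powr (1/q)) + L * L * (C * e2 powr (1/p) * F_f f a b \<alpha> q powr (1/q))"
    using X1 X2 by linarith
  also have "\<dots> = L * (L * C * (e1 powr (1 / p) * E_f f a b \<alpha> q powr (1 / q)
          + e2 powr (1 / p) * F_f f a b \<alpha> q powr (1 / q)))"
    by (simp add: algebra_simps)
  finally have "\<bar>I_f f lam \<alpha> a b\<bar> \<le> L * C * (e1 powr (1 / p) * E_f f a b \<alpha> q powr (1 / q)
          + e2 powr (1 / p) * F_f f a b \<alpha> q powr (1 / q))"
    using L by (simp add: mult_le_cancel_left_pos)
  thus ?thesis unfolding C_def L_def .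
qed




lemma cv_plus:
  fixes x y L e p :: real
  assumes "x \<ge> 0" "y \<ge> 0" "L > 0"
  shows "((x * L) powr e + (y * L) powr e) / (p + 1) = L powr e * (x powr e + y powr e) / (p + 1)"
  using assms by (simp add: powr_mult algebra_simps)

lemma cv_minus:
  fixes x y L e p :: real
  assumes "x \<ge> 0" "y \<ge> 0" "L > 0"
  shows "((x * L) powr e - (y * L) powr e) / (p + 1) = L powr e * (x powr e - y powr e) / (p + 1)"
  using assms by (simp add: powr_mult algebra_simps)

theorem corollary2p7:
  fixes f :: "real \<Rightarrow> real" and I :: "real set"
    and a b \<alpha> lam p q :: real
  assumes "is_interval I"
    and "f differentiable_on interior I"
    and "a \<in> interior I" and "b \<in> interior I" and "a < b"
    and "deriv f absolutely_integrable_on {a..b}"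
    and "\<alpha> \<in> {0..1}" and "lam \<in> {0..1}"
    and "q > 1"
    and "concave_on {a..b} (\<lambda>x. \<bar>deriv f x\<bar> powr q)"
    and "1 / p + 1 / q = 1"
  shows
    "(\<alpha> * lam \<le> 1 - \<alpha> \<and> 1 - \<alpha> \<le> 1 - lam * (1 - \<alpha>) \<longrightarrow>
       \<bar>I_f f lam \<alpha> a b\<bar> \<le> (b - a) * (1 / (p + 1)) powr (1 / p) *
         (eps1 \<alpha> lam p powr (1 / p) * E_f f a b \<alpha> q powr (1 / q)
          + eps1 (1 - \<alpha>) lam p powr (1 / p) * F_f f a b \<alpha> q powr (1 / q)))
     \<and>
     (\<alpha> * lam \<le> 1 - lam * (1 - \<alpha>) \<and> 1 - lam * (1 - \<alpha>) \<le> 1 - \<alpha> \<longrightarrow>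
       \<bar>I_f f lam \<alpha> a b\<bar> \<le> (b - a) * (1 / (p + 1)) powr (1 / p) *
         (eps1 \<alpha> lam p powr (1 / p) * E_f f a b \<alpha> q powr (1 / q)
          + eps2 (1 - \<alpha>) lam p powr (1 / p) * F_f f a b \<alpha> q powr (1 / q)))
     \<and>
     (1 - \<alpha> \<le> \<alpha> * lam \<and> \<alpha> * lam \<le> 1 - lam * (1 - \<alpha>) \<longrightarrow>
       \<bar>I_f f lam \<alpha> a b\<bar> \<le> (b - a) * (1 / (p + 1)) powr (1 / p) *
         (eps2 \<alpha> lam p powr (1 / p) * E_f f a b \<alpha> q powr (1 / q)
          + eps1 (1 - \<alpha>) lam p powr (1 / p) * F_f f a b \<alpha> q powr (1 / q)))"
proof -
  define L where "L = b - a"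
  have L: "L > 0" using assms(5) L_def by simp
  have a0: "0 \<le> \<alpha>" "\<alpha> \<le> 1" and l0: "0 \<le> lam" "lam \<le> 1" using assms(7,8) by auto
  have pq: "p > 1" "q > 1" "1/p + 1/q = 1"
  proof -
    have "1/p = 1 - 1/q" using assms(11) by simp
    moreover have "0 < 1 - 1/q" "1 - 1/q < 1" using assms(9) by auto
    ultimately have i1: "0 < 1/p" and i2: "1/p < 1" by simp_all
    from i1 have "p > 0" by (simp add: zero_less_divide_1_iff)
    with i2 show "p > 1" by (simp add: divide_less_eq)
  qed (use assms(9,11) in auto)
  have p0: "p > 0" using pq by simp
  have sub: "{a..b} \<subseteq> interior I"
  proof -
    have "convex (interior I)" using is_interval_convex[OF assms(1)] by simp
    hence "closed_segment a b \<subseteq> interior I" using assms(3,4) convex_contains_segment by blast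
    thus ?thesis using assms(5) by (simp add: closed_segment_eq_real_ivl)
  qed
  have D: "(f has_real_derivative deriv f x) (at x)" if "x \<in> {a..b}" for x
  proof -
    have "f differentiable at x"
      using assms(2) sub that differentiable_on_eq_differentiable_at[OF open_interior] by blast
    thus ?thesis by (simp add: DERIV_deriv_iff_real_differentiable)
  qed
  define m where "m = \<alpha> * a + (1 - \<alpha>) * b"
  define u where "u = a + \<alpha> * lam * (b - a)"
  define v where "v = b - lam * (1 - \<alpha>) * (b - a)"
  have ua: "u - a = (\<alpha> * lam) * L" unfolding u_def L_def by simp
  have mu: "m - u = (1 - \<alpha> - \<alpha> * lam) * L" unfolding u_def m_def L_def by (simp add: algebra_simps)
  have um: "u - m = (\<alpha> * lam - 1 + \<alpha>) * L" unfolding u_def m_def L_def by (simp add: algebra_simps)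
  have vm: "v - m = (1 - (1 - \<alpha>) - (1 - \<alpha>) * lam) * L" unfolding v_def m_def L_def by (simp add: algebra_simps)
  have bv: "b - v = ((1 - \<alpha>) * lam) * L" unfolding v_def L_def by (simp add: algebra_simps)
  have mv: "m - v = ((1 - \<alpha>) * lam - 1 + (1 - \<alpha>)) * L" unfolding v_def m_def L_def by (simp add: algebra_simps)
  have ma: "m - a = (1 - \<alpha>) * L" "b - m = \<alpha> * L" unfolding m_def L_def by (simp_all add: algebra_simps)
  have "0 \<le> (1 - \<alpha>) * L" "0 \<le> \<alpha> * L" using a0 L by simp_all
  hence am: "a \<le> m" "m \<le> b" using ma by linarith+
  have al0: "0 \<le> \<alpha> * lam" "0 \<le> (1 - \<alpha>) * lam" using a0 l0 by simp_all
  have MB: "\<bar>I_f f lam \<alpha> a b\<bar> \<le> (b - a) * (1 / (p + 1)) powr (1 / p) *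
         (e1 powr (1 / p) * E_f f a b \<alpha> q powr (1 / q)
          + e2 powr (1 / p) * F_f f a b \<alpha> q powr (1 / q))"
    if I1: "((\<lambda>x. \<bar>x - u\<bar> powr p) has_integral ((b - a) powr (p+1) * e1 / (p+1))) {a..m}"
    and I2: "((\<lambda>x. \<bar>x - v\<bar> powr p) has_integral ((b - a) powr (p+1) * e2 / (p+1))) {m..b}" for e1 e2
    by (rule main_bound[OF assms(5) D assms(6) assms(7) assms(8) pq assms(10) u_def v_def I1[unfolded m_def] I2[unfolded m_def]])
  have Int1a: "((\<lambda>x. \<bar>x - u\<bar> powr p) has_integral ((b - a) powr (p+1) * eps1 \<alpha> lam p / (p+1))) {a..m}"
    if h: "\<alpha> * lam \<le> 1 - \<alpha>"
  proof -
    have nn: "0 \<le> 1 - \<alpha> - \<alpha> * lam" using h by simp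
    have "((\<lambda>x. \<bar>x - u\<bar> powr p) has_integral ((u - a) powr (p+1) + (m - u) powr (p+1)) / (p+1)) {a..m}"
    proof (rule int_abs_powr(2)[OF p0 am(1)])
      have "0 \<le> (\<alpha> * lam) * L" "0 \<le> (1 - \<alpha> - \<alpha> * lam) * L" using al0 nn L by simp_all
      thus "a \<le> u" "u \<le> m" using ua mu by linarith+
    qed
    thus ?thesis unfolding ua mu cv_plus[OF al0(1) nn L] eps1_def L_def[symmetric] .
  qed
  have Int1b: "((\<lambda>x. \<bar>x - u\<bar> powr p) has_integral ((b - a) powr (p+1) * eps2 \<alpha> lam p / (p+1))) {a..m}"
    if h: "1 - \<alpha> \<le> \<alpha> * lam"
  proof -
    have nn: "0 \<le> \<alpha> * lam - 1 + \<alpha>" using h by simp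
    have "((\<lambda>x. \<bar>x - u\<bar> powr p) has_integral ((u - a) powr (p+1) - (u - m) powr (p+1)) / (p+1)) {a..m}"
    proof (rule int_abs_powr(3)[OF p0 am(1)])
      have "0 \<le> (\<alpha> * lam - 1 + \<alpha>) * L" using nn L by simp
      thus "m \<le> u" using um by linarith
    qed
    thus ?thesis unfolding ua um cv_minus[OF al0(1) nn L] eps2_def L_def[symmetric] .
  qed
  have Int2a: "((\<lambda>x. \<bar>x - v\<bar> powr p) has_integral ((b - a) powr (p+1) * eps1 (1 - \<alpha>) lam p / (p+1))) {m..b}"
    if h: "(1 - \<alpha>) * lam \<le> \<alpha>"
  proof -
    have nn: "0 \<le> 1 - (1 - \<alpha>) - (1 - \<alpha>) * lam" using h by simp
    have "((\<lambda>x. \<bar>x - v\<bar> powr p) has_integral ((v - m) powr (p+1) + (b - v) powr (p+1)) / (p+1)) {m..b}"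
    proof (rule int_abs_powr(2)[OF p0 am(2)])
      have "0 \<le> ((1 - \<alpha>) * lam) * L" "0 \<le> (1 - (1 - \<alpha>) - (1 - \<alpha>) * lam) * L" using al0 nn L by simp_all
      thus "m \<le> v" "v \<le> b" using vm bv by linarith+
    qed
    thus ?thesis unfolding vm bv cv_plus[OF nn al0(2) L] eps1_def L_def[symmetric] by (simp add: add.commute)
  qed
  have Int2b: "((\<lambda>x. \<bar>x - v\<bar> powr p) has_integral ((b - a) powr (p+1) * eps2 (1 - \<alpha>) lam p / (p+1))) {m..b}"
    if h: "\<alpha> \<le> (1 - \<alpha>) * lam"
  proof -
    have nn: "0 \<le> (1 - \<alpha>) * lam - 1 + (1 - \<alpha>)" using h by simp
    have "((\<lambda>x. \<bar>x - v\<bar> powr p) has_integral ((b - v) powr (p+1) - (m - v) powr (p+1)) / (p+1)) {m..b}"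
    proof (rule int_abs_powr(1)[OF p0 am(2)])
      have "0 \<le> ((1 - \<alpha>) * lam - 1 + (1 - \<alpha>)) * L" using nn L by simp
      thus "v \<le> m" using mv by linarith
    qed
    thus ?thesis unfolding bv mv cv_minus[OF al0(2) nn L] eps2_def L_def[symmetric] .
  qed
  show ?thesis
  proof (intro conjI impI; elim conjE)
    assume h1: "\<alpha> * lam \<le> 1 - \<alpha>" and h2: "1 - \<alpha> \<le> 1 - lam * (1 - \<alpha>)"
    have "(1 - \<alpha>) * lam \<le> \<alpha>" using h2 by (simp add: algebra_simps)
    thus "\<bar>I_f f lam \<alpha> a b\<bar> \<le> (b - a) * (1 / (p + 1)) powr (1 / p) *
         (eps1 \<alpha> lam p powr (1 / p) * E_f f a b \<alpha> q powr (1 / q)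
          + eps1 (1 - \<alpha>) lam p powr (1 / p) * F_f f a b \<alpha> q powr (1 / q))"
      by (intro MB Int1a Int2a h1)
  next
    assume h1: "\<alpha> * lam \<le> 1 - lam * (1 - \<alpha>)" and h2: "1 - lam * (1 - \<alpha>) \<le> 1 - \<alpha>"
    have "\<alpha> * lam \<le> 1 - \<alpha>" using h1 h2 by linarith
    moreover have "\<alpha> \<le> (1 - \<alpha>) * lam" using h2 by (simp add: algebra_simps)
    ultimately show "\<bar>I_f f lam \<alpha> a b\<bar> \<le> (b - a) * (1 / (p + 1)) powr (1 / p) *
         (eps1 \<alpha> lam p powr (1 / p) * E_f f a b \<alpha> q powr (1 / q)
          + eps2 (1 - \<alpha>) lam p powr (1 / p) * F_f f a b \<alpha> q powr (1 / q))"
      by (intro MB Int1a Int2b)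
  next
    assume h1: "1 - \<alpha> \<le> \<alpha> * lam" and h2: "\<alpha> * lam \<le> 1 - lam * (1 - \<alpha>)"
    have "lam * (1 - \<alpha>) \<le> lam * (\<alpha> * lam)" using h1 l0 by (intro mult_left_mono)
    also have "\<dots> \<le> \<alpha> * lam" using l0 al0(1) by (intro mult_left_le_one_le)
    also have "\<dots> \<le> \<alpha>" using l0 a0 by (intro mult_left_le)
    finally have "(1 - \<alpha>) * lam \<le> \<alpha>" by (simp add: mult.commute)
    thus "\<bar>I_f f lam \<alpha> a b\<bar> \<le> (b - a) * (1 / (p + 1)) powr (1 / p) *
         (eps2 \<alpha> lam p powr (1 / p) * E_f f a b \<alpha> q powr (1 / q)
          + eps1 (1 - \<alpha>) lam p powr (1 / p) * F_f f a b \<alpha> q powr (1 / q))"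
      by (intro MB Int1b Int2a h1)
  qed
qed


end
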